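(* The function $T=s^2/c^2$ satisfies the differential equation $\nabla\,(T')^2=4T(1+T)(1+\lambda^2T)$, and neither $T$ nor $t=s/c$ is elliptic (i.e. neither admits an extension from a small disc about $0$ to an elliptic function on $\mathbb{C}$).
   Context: Let $0<\kappa<1$ and $\lambda=\sqrt{1-\kappa^2}\in(0,1)$. Let $F(\tfrac16,\tfrac56;\tfrac12;\cdot)$ denote the Gauss hypergeometric function. Define $u$ as a function of $\phi$ near $0$ by $u=\int_0^{\sin\phi}F(\tfrac16,\tfrac56;\tfrac12;\kappa^2t^2)\,\frac{dt}{\sqrt{1-t^2}}$; near the origin (fixing $0$) this inverts to a holomorphic function $u\mapsto\phi(u)$ with $\phi(0)=0$. Let $\psi$ be the holomorphic function near $0$ with $\psi(0)=0$ and $\sin\psi=\kappa\sin\phi$. Set $s=\sin\phi$, $c=\cos\phi$, $\partial=\cos\tfrac23\psi$, $\nabla=\partial^2$, all as functions of $u$ on a small disc about $0$; primes denote $d/du$. *)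

theory Defs
  imports "HOL-Complex_Analysis.Complex_Analysis"
begin

definition hyp2f1 :: "complex \<Rightarrow> complex \<Rightarrow> complex \<Rightarrow> complex \<Rightarrow> complex" where
  "hyp2f1 a b c z = (\<Sum>n. pochhammer a n * pochhammer b n / (pochhammer c n * fact n) * z ^ n)"

text \<open>Since meromorphic functions in HOL carry arbitrary values
  at poles / removable points, periodicity is required only up to such isolated points.\<close>
definition elliptic_fun :: "(complex \<Rightarrow> complex) \<Rightarrow> bool" where
  "elliptic_fun g \<longleftrightarrow> g meromorphic_on UNIV \<and>
     (\<exists>\<omega>1 \<omega>2. \<omega>1 \<noteq> 0 \<and> Im (\<omega>2 / \<omega>1) \<noteq> 0 \<and>
        (\<forall>z. eventually (\<lambda>w. g (w + \<omega>1) = g w \<and> g (w + \<omega>2) = g w) (at z)))"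

definition extends_to_elliptic :: "(complex \<Rightarrow> complex) \<Rightarrow> bool" where
  "extends_to_elliptic f \<longleftrightarrow> (\<exists>g. elliptic_fun g \<and> eventually (\<lambda>u. g u = f u) (at 0))"

end

theory Submission
  imports Defs
begin


definition hcoef :: "nat \<Rightarrow> complex" where
  "hcoef n = pochhammer (1/6) n * pochhammer (5/6) n / (pochhammer (1/2) n * fact n)"

definition hq :: "nat \<Rightarrow> real" where
  "hq n = ((1/6 + real n) * (5/6 + real n)) / ((1/2 + real n) * (real n + 1))"

lemma poch_half_nz: "pochhammer (1/2::complex) n \<noteq> 0"
proof
  assume "pochhammer (1/2::complex) n = 0"
  then obtain k where "(1/2::complex) = - of_nat k" by (auto simp: pochhammer_eq_0_iff)
  hence "Re (1/2::complex) = Re (- of_nat k)" by (rule arg_cong)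
  hence "(1/2::real) = - real k" by simp
  thus False by linarith
qed

lemma hcoef_Suc: "hcoef (Suc n) = hcoef n * of_real (hq n)"
proof -
  have nz: "(1/2::complex) + of_nat n \<noteq> 0"
  proof
    assume "(1/2::complex) + of_nat n = 0"
    hence "Re ((1/2::complex) + of_nat n) = 0" by simp
    thus False by simp
  qed
  have nz2: "(of_nat n + 1 :: complex) \<noteq> 0" by (metis of_nat_Suc of_nat_eq_0_iff nat.distinct(1) add.commute)
  show ?thesis
    unfolding hcoef_def hq_def using poch_half_nz[of n] nz nz2
    by (simp add: pochhammer_Suc field_simps)
qed

lemma hq_le1: "hq n \<le> 1" "hq n \<ge> 0"
proof -
  have a: "0 < (1/2 + real n) * (real n + 1)" by (intro mult_pos_pos) auto
  have b: "(1/6 + real n) * (5/6 + real n) \<le> (1/2 + real n) * (real n + 1)"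
    by (simp add: field_simps)
  show "hq n \<le> 1" unfolding hq_def using a b by (simp add: divide_le_eq_1)
  show "hq n \<ge> 0" unfolding hq_def by (intro divide_nonneg_nonneg mult_nonneg_nonneg) auto
qed

lemma hcoef_0: "hcoef 0 = 1" by (simp add: hcoef_def)

lemma hcoef_bound: "norm (hcoef n) \<le> 1"
proof (induction n)
  case 0 thus ?case by (simp add: hcoef_0)
next
  case (Suc n)
  have "norm (hcoef (Suc n)) = norm (hcoef n) * hq n"
    using hq_le1(2)[of n] by (simp add: hcoef_Suc norm_mult)
  also have "\<dots> \<le> 1 * 1" using Suc hq_le1[of n] by (intro mult_mono) auto
  finally show ?case by simp
qed

definition HA :: "complex fps" where "HA = Abs_fps hcoef"

lemma HA_radius: "fps_conv_radius HA \<ge> 1"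
  unfolding fps_conv_radius_def HA_def fps_nth_Abs_fps
proof (rule conv_radius_geI_ex')
  fix r :: real assume r: "0 < r" "ereal r < 1"
  hence r1: "r < 1" by simp
  show "summable (\<lambda>n. hcoef n * of_real r ^ n)"
  proof (rule summable_comparison_test[OF _ summable_geometric[of r]])
    show "\<exists>N. \<forall>n\<ge>N. norm (hcoef n * complex_of_real r ^ n) \<le> r ^ n"
      using r hcoef_bound by (auto simp: norm_mult norm_power intro!: mult_left_le_one_le)
  qed (use r r1 in auto)
qed

lemma hyp2f1_HA: "hyp2f1 (1/6) (5/6) (1/2) w = eval_fps HA w"
  by (simp add: hyp2f1_def eval_fps_def HA_def hcoef_def)


lemma HA_nth: "HA $ n = hcoef n" by (simp add: HA_def)

abbreviation "HA1 \<equiv> fps_deriv HA"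
abbreviation "HA2 \<equiv> fps_deriv (fps_deriv HA)"

lemma HA_ode:
  "fps_X * HA2 - fps_X * (fps_X * HA2) + fps_const (1/2) * HA1 - fps_const 2 * (fps_X * HA1)
     - fps_const (5/36) * HA = 0"
proof (rule fps_ext)
  fix m :: nat
  have c1: "(fps_X * HA2) $ m = of_nat m * of_nat (m+1) * hcoef (m+1)"
    by (cases m) (simp_all add: fps_deriv_nth HA_nth algebra_simps)
  have c2: "(fps_X * (fps_X * HA2)) $ m = (of_nat m - 1) * of_nat m * hcoef m"
  proof (cases m)
    case (Suc k) thus ?thesis by (cases k) (simp_all add: fps_deriv_nth HA_nth algebra_simps)
  qed simp
  have c3: "HA1 $ m = of_nat (m+1) * hcoef (m+1)"
    by (simp add: fps_deriv_nth HA_nth)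
  have c4: "(fps_X * HA1) $ m = of_nat m * hcoef m"
    by (cases m) (simp_all add: fps_deriv_nth HA_nth)
  have key: "(of_nat m + 1) * (of_nat m + 1/2) * complex_of_real (hq m) = (of_nat m)^2 + of_nat m + 5/36"
  proof -
    have D: "(1/2 + real m) * (real m + 1) \<noteq> 0" by (intro mult_pos_pos[THEN less_imp_neq, symmetric]) auto
    have "(real m + 1) * (real m + 1/2) * hq m = (1/6 + real m) * (5/6 + real m)"
      unfolding hq_def using D by (simp add: field_simps)
    also have "\<dots> = (real m)^2 + real m + 5/36" by (simp add: field_simps power2_eq_square)
    finally have "(real m + 1) * (real m + 1/2) * hq m = (real m)^2 + real m + 5/36" .
    hence "complex_of_real ((real m + 1) * (real m + 1/2) * hq m) = complex_of_real ((real m)^2 + real m + 5/36)"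
      by simp
    thus ?thesis by simp
  qed
  have "(fps_X * HA2 - fps_X * (fps_X * HA2) + fps_const (1/2) * HA1 - fps_const 2 * (fps_X * HA1)
     - fps_const (5/36) * HA) $ m =
     hcoef m * ((of_nat m + 1) * (of_nat m + 1/2) * complex_of_real (hq m) - ((of_nat m)^2 + of_nat m + 5/36))"
    apply (simp only: fps_add_nth fps_sub_nth fps_mult_left_const_nth c1 c2 c3 c4 HA_nth hcoef_Suc)
    apply (simp add: hcoef_Suc field_simps power2_eq_square)
    done
  also have "\<dots> = 0" by (simp add: key)
  finally show "(fps_X * HA2 - fps_X * (fps_X * HA2) + fps_const (1/2) * HA1 - fps_const 2 * (fps_X * HA1)
     - fps_const (5/36) * HA) $ m = 0 $ m" by simp
qed

lemma HA_radii: "fps_conv_radius HA \<ge> 1" "fps_conv_radius HA1 \<ge> 1" "fps_conv_radius HA2 \<ge> 1"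
  "fps_conv_radius (fps_X * HA2) \<ge> 1" "fps_conv_radius (fps_X * (fps_X * HA2)) \<ge> 1"
  "fps_conv_radius (fps_X * HA1) \<ge> 1"
proof -
  show a: "fps_conv_radius HA \<ge> 1" by (rule HA_radius)
  show b: "fps_conv_radius HA1 \<ge> 1" using a fps_conv_radius_deriv[of HA] by order
  show c: "fps_conv_radius HA2 \<ge> 1" using b fps_conv_radius_deriv[of HA1] by order
  show d: "fps_conv_radius (fps_X * HA2) \<ge> 1" using c fps_conv_radius_mult[of fps_X HA2] by (simp add: min_def split: if_splits)
  show "fps_conv_radius (fps_X * (fps_X * HA2)) \<ge> 1" using d fps_conv_radius_mult[of fps_X "fps_X * HA2"] by (simp add: min_def split: if_splits)
  show "fps_conv_radius (fps_X * HA1) \<ge> 1" using b fps_conv_radius_mult[of fps_X HA1] by (simp add: min_def split: if_splits)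
qed

definition R1 :: "complex fps \<Rightarrow> bool" where "R1 f \<longleftrightarrow> fps_conv_radius f \<ge> 1"

lemma R1_intros: "R1 f \<Longrightarrow> R1 g \<Longrightarrow> R1 (f + g)" "R1 f \<Longrightarrow> R1 g \<Longrightarrow> R1 (f - g)"
  "R1 f \<Longrightarrow> R1 g \<Longrightarrow> R1 (f * g)" "R1 (fps_const c)" "R1 fps_X"
  "R1 HA" "R1 HA1" "R1 HA2"
  unfolding R1_def
  using fps_conv_radius_add[of f g] fps_conv_radius_diff[of f g] fps_conv_radius_mult[of f g] HA_radii(1-3)
  by (auto simp: min_def split: if_splits)

lemma in_rad: "fps_conv_radius f \<ge> 1 \<Longrightarrow> norm (w::complex) < 1 \<Longrightarrow> norm w < fps_conv_radius f"
  by (metis ereal_less(3) less_le_trans one_ereal_def)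

lemma R1_eval:
  assumes "norm w < 1"
  shows "R1 f \<Longrightarrow> R1 g \<Longrightarrow> eval_fps (f + g) w = eval_fps f w + eval_fps g w"
    "R1 f \<Longrightarrow> R1 g \<Longrightarrow> eval_fps (f - g) w = eval_fps f w - eval_fps g w"
    "R1 f \<Longrightarrow> R1 g \<Longrightarrow> eval_fps (f * g) w = eval_fps f w * eval_fps g w"
  using assms by (auto simp: R1_def intro!: eval_fps_add eval_fps_diff eval_fps_mult in_rad)

lemma HA_ode_eval:
  assumes w: "norm w < 1"
  shows "w * eval_fps HA2 w - w * (w * eval_fps HA2 w) + (1/2) * eval_fps HA1 w
          - 2 * (w * eval_fps HA1 w) - (5/36) * eval_fps HA w = 0"
proof -
  note R = in_rad[OF HA_radii(1) w] in_rad[OF HA_radii(2) w] in_rad[OF HA_radii(3) w]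
     in_rad[OF HA_radii(4) w] in_rad[OF HA_radii(5) w] in_rad[OF HA_radii(6) w]
  have R2: "norm w < fps_conv_radius (fps_const c * f)" if "norm w < fps_conv_radius f" for c f
    using that fps_conv_radius_mult[of "fps_const c" f] by (simp add: min_def split: if_splits)
  have "eval_fps (fps_X * HA2 - fps_X * (fps_X * HA2) + fps_const (1/2) * HA1 - fps_const 2 * (fps_X * HA1)
     - fps_const (5/36) * HA) w = 0" by (simp add: HA_ode)
  moreover have "eval_fps (fps_X * HA2 - fps_X * (fps_X * HA2) + fps_const (1/2) * HA1 - fps_const 2 * (fps_X * HA1)
     - fps_const (5/36) * HA) w = w * eval_fps HA2 w - w * (w * eval_fps HA2 w) + (1/2) * eval_fps HA1 w
          - 2 * (w * eval_fps HA1 w) - (5/36) * eval_fps HA w"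
    using assms by (simp add: R1_eval R1_intros)
  ultimately show ?thesis by simp
qed

lemma R1_chain [derivative_intros]:
  assumes "R1 f" "(g has_field_derivative g') (at z within S)" "norm (g z) < 1"
  shows "((\<lambda>z. eval_fps f (g z)) has_field_derivative (eval_fps (fps_deriv f) (g z) * g')) (at z within S)"
proof -
  have "norm (g z) < fps_conv_radius f" using assms(1,3) by (auto simp: R1_def intro: in_rad)
  from DERIV_chain2[OF has_field_derivative_eval_fps[OF this] assms(2)] show ?thesis
    by simp
qed

lemma zalg: fixes sn cs A B Fv :: complex assumes "sn * sn + cs * cs = 1"
  shows "A * (2 * sn * cs) * (2 * sn * cs) * cs + B * (2 * cs * cs - 2 * sn * sn) * cs - B * (2 * sn * cs) * sn - (B * (2 * sn * cs) * sn + Fv * cs) + (4/9) * (Fv * cs)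
     = 4 * cs * ((sn^2) * A - (sn^2) * ((sn^2) * A) + (1/2) * B - 2 * ((sn^2) * B) - (5/36) * Fv)"
  using assms by algebra

lemma lincomb: "(a::complex) + k * b = c * d \<Longrightarrow> d = 0 \<Longrightarrow> a = (- k) * b"
  by (simp add: eq_neg_iff_add_eq_0)

definition "Zf z = eval_fps HA (sin z ^ 2) * cos z"
definition "Z1f z = eval_fps HA1 (sin z ^ 2) * (2 * sin z * cos z) * cos z - eval_fps HA (sin z ^ 2) * sin z"

lemma Zf_deriv: "norm (sin z ^ 2) < 1 \<Longrightarrow> (Zf has_field_derivative Z1f z) (at z)"
  unfolding Zf_def Z1f_def
  by (auto intro!: derivative_eq_intros R1_intros in_rad HA_radii simp: algebra_simps)

lemma Z1f_deriv: assumes "norm (sin z ^ 2) < 1" shows "(Z1f has_field_derivative (-(4/9) * Zf z)) (at z)"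
proof -
  define w where "w = sin z ^ 2"
  have ode: "w * eval_fps HA2 w - w * (w * eval_fps HA2 w) + (1/2) * eval_fps HA1 w
          - 2 * (w * eval_fps HA1 w) - (5/36) * eval_fps HA w = 0"
    by (rule HA_ode_eval[OF assms[folded w_def]])
  have co: "cos z ^ 2 = 1 - sin z ^ 2" by (simp add: cos_squared_eq)
  have "(Z1f has_field_derivative
      (eval_fps HA2 w * (2 * sin z * cos z) * (2 * sin z * cos z) * cos z
       + eval_fps HA1 w * (2 * cos z * cos z - 2 * sin z * sin z) * cos z
       - eval_fps HA1 w * (2 * sin z * cos z) * sin z
       - (eval_fps HA1 w * (2 * sin z * cos z) * sin z + eval_fps HA w * cos z))) (at z)"
    unfolding Z1f_def w_def using assms
    by (auto intro!: derivative_eq_intros R1_intros in_rad HA_radii simp: algebra_simps)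
  moreover have "eval_fps HA2 w * (2 * sin z * cos z) * (2 * sin z * cos z) * cos z
       + eval_fps HA1 w * (2 * cos z * cos z - 2 * sin z * sin z) * cos z
       - eval_fps HA1 w * (2 * sin z * cos z) * sin z
       - (eval_fps HA1 w * (2 * sin z * cos z) * sin z + eval_fps HA w * cos z) = -(4/9) * Zf z"
  proof -
    have "eval_fps HA2 w * (2 * sin z * cos z) * (2 * sin z * cos z) * cos z
       + eval_fps HA1 w * (2 * cos z * cos z - 2 * sin z * sin z) * cos z
       - eval_fps HA1 w * (2 * sin z * cos z) * sin z
       - (eval_fps HA1 w * (2 * sin z * cos z) * sin z + eval_fps HA w * cos z) + (4/9) * Zf z
       = 4 * cos z * (w * eval_fps HA2 w - w * (w * eval_fps HA2 w) + (1/2) * eval_fps HA1 w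
          - 2 * (w * eval_fps HA1 w) - (5/36) * eval_fps HA w)"
      unfolding Zf_def w_def by (rule zalg) (metis sin_cos_squared_add3 add.commute)
    thus ?thesis using ode by (rule lincomb)
  qed
  ultimately show ?thesis by simp
qed

lemma Zf_deriv': "norm (sin z ^ 2) < 1 \<Longrightarrow> (Zf has_field_derivative Z1f z) (at z within S)"
  using Zf_deriv has_field_derivative_at_within by blast
lemma Z1f_deriv': "norm (sin z ^ 2) < 1 \<Longrightarrow> (Z1f has_field_derivative (-(4/9) * Zf z)) (at z within S)"
  using Z1f_deriv has_field_derivative_at_within by blast

lemma wronsk_alg:
  fixes Zv Z1 cc ss :: complex
  assumes "Zv * (-(2/3) * ss) - Z1 * cc = 0" "Zv * ((2/3) * cc) - Z1 * ss = 2/3" "ss * ss + cc * cc = 1"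
  shows "Zv = cc"
  using assms by algebra

lemma hyp_identity:
  obtains e where "e > 0" "\<forall>z\<in>ball 0 e. eval_fps HA (sin z ^ 2) * cos z = cos (2/3 * z)"
proof -
  have cs: "continuous_on UNIV (sin :: complex \<Rightarrow> complex)"
    using continuous_on_sin[OF continuous_on_id, of UNIV] by simp
  have "open {z::complex. norm (sin z ^ 2) < (1::real)}"
    by (intro open_Collect_less continuous_intros cs)
  moreover have "(0::complex) \<in> {z::complex. norm (sin z ^ 2) < (1::real)}" by simp
  ultimately obtain e where e: "e > 0" "ball 0 e \<subseteq> {z::complex. norm (sin z ^ 2) < (1::real)}"
    by (meson openE)
  define S where "S = ball (0::complex) e"
  have inS: "norm (sin z ^ 2) < 1" if "z \<in> S" for z using that e S_def by auto
  define W1 where "W1 z = Zf z * (-(2/3) * sin (2/3 * z)) - Z1f z * cos (2/3 * z)" for z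
  define W2 where "W2 z = Zf z * ((2/3) * cos (2/3 * z)) - Z1f z * sin (2/3 * z)" for z
  have "\<exists>c. \<forall>z\<in>S. W1 z = c"
  proof (rule has_field_derivative_zero_constant)
    show "convex S" by (simp add: S_def)
    fix z assume "z \<in> S"
    note d = Zf_deriv'[OF inS[OF this]] Z1f_deriv'[OF inS[OF this]]
    show "(W1 has_field_derivative 0) (at z within S)"
      unfolding W1_def[abs_def]
      by (rule derivative_eq_intros d refl | simp add: algebra_simps)+
  qed
  then obtain c1 where c1: "\<forall>z\<in>S. W1 z = c1" by blast
  have "\<exists>c. \<forall>z\<in>S. W2 z = c"
  proof (rule has_field_derivative_zero_constant)
    show "convex S" by (simp add: S_def)
    fix z assume "z \<in> S"
    note d = Zf_deriv'[OF inS[OF this]] Z1f_deriv'[OF inS[OF this]]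
    show "(W2 has_field_derivative 0) (at z within S)"
      unfolding W2_def[abs_def]
      by (rule derivative_eq_intros d refl | simp add: algebra_simps)+
  qed
  then obtain c2 where c2: "\<forall>z\<in>S. W2 z = c2" by blast
  have 0: "0 \<in> S" using e S_def by simp
  have Z0: "Zf 0 = 1" "Z1f 0 = 0" by (simp_all add: Zf_def Z1f_def eval_fps_at_0 HA_nth hcoef_0)
  have "c1 = 0" using c1 0 Z0 by (auto simp: W1_def)
  have "c2 = 2/3" using c2 0 Z0 by (auto simp: W2_def)
  show ?thesis
  proof (rule that[OF e(1)], intro ballI)
    fix z :: complex assume z: "z \<in> ball 0 e"
    hence "W1 z = 0" "W2 z = 2/3" using c1 c2 \<open>c1 = 0\<close> \<open>c2 = 2/3\<close> S_def by auto
    hence "Zf z = cos (2/3 * z)"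
      unfolding W1_def W2_def by (rule wronsk_alg) (metis sin_cos_squared_add3 add.commute)
    thus "eval_fps HA (sin z ^ 2) * cos z = cos (2/3 * z)" by (simp add: Zf_def)
  qed
qed



definition gI :: "real \<Rightarrow> complex \<Rightarrow> complex" where
  "gI k t = hyp2f1 (1/6) (5/6) (1/2) (complex_of_real (k^2) * t^2) / csqrt (1 - t^2)"

lemma small_t:
  assumes "norm (t::complex) < 1/2"
  shows "norm (t^2) < 1/4" "Re (1 - t^2) > 0"
proof -
  have "norm (t^2) = norm t ^ 2" by (simp add: norm_power)
  also have "\<dots> < (1/2)^2" using assms by (intro power_strict_mono) auto
  finally show a: "norm (t^2) < 1/4" by (simp add: power2_eq_square)
  have "Re (t^2) \<le> norm (t^2)" by (rule complex_Re_le_cmod)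
  thus "Re (1 - t^2) > 0" using a by simp
qed

lemma gI_analytic:
  assumes "0 < k" "k < 1"
  shows "gI k analytic_on ball 0 (1/2)"
proof -
  have k2: "k^2 \<le> 1" using assms by (simp add: power_le_one)
  have "(\<lambda>t. eval_fps HA (complex_of_real (k^2) * t^2) / csqrt (1 - t^2)) analytic_on ball 0 (1/2)"
  proof (intro analytic_intros)
    fix t :: complex assume t: "t \<in> ball 0 (1/2)"
    hence st: "norm (t^2) < 1/4" "Re (1 - t^2) > 0" using small_t[of t] by auto
    have "norm (complex_of_real (k^2) * t^2) = k^2 * norm (t^2)" by (simp add: norm_mult norm_power)
    also have "\<dots> \<le> 1 * norm (t^2)" using k2 by (intro mult_right_mono) auto
    finally have "norm (complex_of_real (k^2) * t^2) < 1" using st by simp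
    thus "ereal (norm (complex_of_real (k^2) * t^2)) < fps_conv_radius HA"
      by (intro in_rad HA_radius)
    show "1 - t^2 \<notin> \<real>\<^sub>\<le>\<^sub>0" using st(2) by (auto simp: complex_nonpos_Reals_iff)
    show "csqrt (1 - t^2) \<noteq> 0" using st(2) by auto
  qed
  thus ?thesis unfolding gI_def[abs_def] hyp2f1_HA .
qed

lemma gI_primitive:
  assumes "0 < k" "k < 1" "w \<in> ball 0 (1/2)"
  shows "((\<lambda>w. contour_integral (linepath 0 w) (gI k)) has_field_derivative gI k w) (at w)"
proof -
  have hol: "gI k holomorphic_on ball 0 (1/2)"
    using gI_analytic[OF assms(1,2)] by (simp add: analytic_imp_holomorphic)
  show ?thesis
  proof (rule triangle_contour_integrals_starlike_primitive[where S = "ball 0 (1/2)"])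
    show "continuous_on (ball 0 (1/2)) (gI k)" using hol by (rule holomorphic_on_imp_continuous_on)
    show "\<And>y::complex. y \<in> ball 0 (1/2) \<Longrightarrow> closed_segment 0 y \<subseteq> ball 0 (1/2)"
      by (rule closed_segment_subset) (auto simp: convex_ball)
    fix b c assume bc: "closed_segment b c \<subseteq> ball (0::complex) (1/2)"
    hence "b \<in> ball 0 (1/2)" "c \<in> ball 0 (1/2)" by auto
    hence "convex hull {0, b, c} \<subseteq> ball 0 (1/2)"
      by (intro hull_minimal) auto
    hence "(gI k has_contour_integral 0) (linepath 0 b +++ linepath b c +++ linepath c 0)"
      by (intro Cauchy_theorem_triangle holomorphic_on_subset[OF hol])
    thus "contour_integral (linepath 0 b) (gI k) + contour_integral (linepath b c) (gI k) +
          contour_integral (linepath c 0) (gI k) = 0"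
      by (rule has_chain_integral_chain_integral3)
  qed (use assms in auto)
qed



lemma ev_cont:
  assumes "isCont f x" "open U" "f x \<in> U"
  shows "eventually (\<lambda>y. f y \<in> U) (nhds x)"
proof -
  have "(f \<longlongrightarrow> f x) (at x)" using assms(1) by (simp add: isCont_def)
  hence "eventually (\<lambda>y. f y \<in> U) (at x)" using assms(2,3) by (rule topological_tendstoD)
  thus ?thesis using assms(3) by (simp add: eventually_nhds_conv_at)
qed

lemma local_facts:
  fixes \<kappa> r :: real and \<phi> \<psi> :: "complex \<Rightarrow> complex"
  assumes \<kappa>: "0 < \<kappa>" "\<kappa> < 1"
    and r: "r > 0"
    and \<phi>_hol: "\<phi> holomorphic_on ball 0 r" and \<phi>0: "\<phi> 0 = 0"
    and \<phi>_inv: "\<forall>u\<in>ball 0 r. contour_integral (linepath 0 (sin (\<phi> u))) (gI \<kappa>) = u"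
    and \<psi>_hol: "\<psi> holomorphic_on ball 0 r" and \<psi>0: "\<psi> 0 = 0"
    and \<psi>_sin: "\<forall>u\<in>ball 0 r. sin (\<psi> u) = complex_of_real \<kappa> * sin (\<phi> u)"
  obtains \<rho> where "0 < \<rho>" "\<rho> \<le> r"
    "\<And>u. u \<in> ball 0 \<rho> \<Longrightarrow> cos (\<phi> u) \<noteq> 0 \<and> cos (\<psi> u) \<noteq> 0 \<and> norm (cos (2/3 * \<psi> u) - 1) < 1/10 \<and>
       (\<phi> has_field_derivative cos (\<psi> u) / cos (2/3 * \<psi> u)) (at u) \<and>
       (\<psi> has_field_derivative \<kappa> * cos (\<phi> u) / cos (2/3 * \<psi> u)) (at u)"
proof -
  obtain e where e: "e > 0" "\<forall>z\<in>ball 0 e. eval_fps HA (sin z ^ 2) * cos z = cos (2/3 * z)"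
    using hyp_identity by blast
  have c\<phi>: "isCont \<phi> 0" using \<phi>_hol r
    by (meson centre_in_ball continuous_on_eq_continuous_at holomorphic_on_imp_continuous_on open_ball)
  have c\<psi>: "isCont \<psi> 0" using \<psi>_hol r
    by (meson centre_in_ball continuous_on_eq_continuous_at holomorphic_on_imp_continuous_on open_ball)
  have ev1: "eventually (\<lambda>u. u \<in> ball 0 r) (nhds (0::complex))"
    using r by (intro eventually_nhds_ball)
  have ev2: "eventually (\<lambda>u. sin (\<phi> u) \<in> ball 0 (1/2)) (nhds 0)"
    by (rule ev_cont) (use \<phi>0 in \<open>auto intro!: continuous_intros c\<phi>\<close>)
  have ev3: "eventually (\<lambda>u. \<psi> u \<in> ball 0 e) (nhds 0)"
    by (rule ev_cont) (use \<psi>0 e in \<open>auto intro!: continuous_intros c\<psi>\<close>)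
  have ev4: "eventually (\<lambda>u. cos (\<phi> u) \<in> {z. Re z > 0}) (nhds 0)"
    by (rule ev_cont) (use \<phi>0 in \<open>auto intro!: continuous_intros c\<phi> open_halfspace_Re_gt\<close>)
  have ev5: "eventually (\<lambda>u. cos (\<psi> u) \<in> {z. Re z > 0}) (nhds 0)"
    by (rule ev_cont) (use \<psi>0 in \<open>auto intro!: continuous_intros c\<psi> open_halfspace_Re_gt\<close>)
  have ev6: "eventually (\<lambda>u. cos (2/3 * \<psi> u) \<in> ball 1 (1/10)) (nhds 0)"
    by (rule ev_cont) (use \<psi>0 in \<open>auto intro!: continuous_intros c\<psi>\<close>)
  have "eventually (\<lambda>u. u \<in> ball 0 r \<and> sin (\<phi> u) \<in> ball 0 (1/2) \<and> \<psi> u \<in> ball 0 e \<and>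
      cos (\<phi> u) \<in> {z. Re z > 0} \<and> cos (\<psi> u) \<in> {z. Re z > 0} \<and> cos (2/3 * \<psi> u) \<in> ball 1 (1/10)) (nhds 0)"
    using ev1 ev2 ev3 ev4 ev5 ev6 by eventually_elim auto
  then obtain \<rho>0 where \<rho>0: "\<rho>0 > 0" and P: "\<And>u. dist u 0 < \<rho>0 \<Longrightarrow> u \<in> ball 0 r \<and> sin (\<phi> u) \<in> ball 0 (1/2) \<and> \<psi> u \<in> ball 0 e \<and>
      cos (\<phi> u) \<in> {z. Re z > 0} \<and> cos (\<psi> u) \<in> {z. Re z > 0} \<and> cos (2/3 * \<psi> u) \<in> ball 1 (1/10)"
    unfolding eventually_nhds_metric by blast
  define \<rho> where "\<rho> = min \<rho>0 r"
  show ?thesis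
  proof (rule that)
    show "0 < \<rho>" "\<rho> \<le> r" using \<rho>0 r by (auto simp: \<rho>_def)
    fix u :: complex assume u: "u \<in> ball 0 \<rho>"
    hence "dist u 0 < \<rho>0" by (simp add: \<rho>_def dist_commute)
    note Pu = P[OF this]
    have ur: "u \<in> ball 0 r" using Pu by simp
    have s_small: "sin (\<phi> u) \<in> ball 0 (1/2)" using Pu by simp
    have ce: "\<psi> u \<in> ball 0 e" using Pu by simp
    have rec: "Re (cos (\<phi> u)) > 0" and rec2: "Re (cos (\<psi> u)) > 0" using Pu by auto
    have cx: "norm (cos (2/3 * \<psi> u) - 1) < 1/10" using Pu by (simp add: dist_norm norm_minus_commute)
    have c_nz: "cos (\<phi> u) \<noteq> 0" using rec by auto
    have c2_nz: "cos (\<psi> u) \<noteq> 0" using rec2 by auto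
    have x_nz: "cos (2/3 * \<psi> u) \<noteq> 0" using cx by auto
    have d\<phi>: "(\<phi> has_field_derivative deriv \<phi> u) (at u)"
      using holomorphic_derivI[OF \<phi>_hol open_ball ur] .
    have d\<psi>: "(\<psi> has_field_derivative deriv \<psi> u) (at u)"
      using holomorphic_derivI[OF \<psi>_hol open_ball ur] .
    define G where "G = (\<lambda>w. contour_integral (linepath 0 w) (gI \<kappa>))"
    have dG: "(G has_field_derivative gI \<kappa> (sin (\<phi> u))) (at (sin (\<phi> u)))"
      unfolding G_def by (rule gI_primitive[OF \<kappa> s_small])
    have ds: "((\<lambda>u. sin (\<phi> u)) has_field_derivative cos (\<phi> u) * deriv \<phi> u) (at u)"
      by (auto intro!: derivative_eq_intros d\<phi>)
    have d1: "((\<lambda>u. G (sin (\<phi> u))) has_field_derivative gI \<kappa> (sin (\<phi> u)) * (cos (\<phi> u) * deriv \<phi> u)) (at u)"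
      using DERIV_chain2[OF dG ds] .
    have d2: "((\<lambda>u. G (sin (\<phi> u))) has_field_derivative 1) (at u)"
    proof (rule has_field_derivative_transform_within_open[OF DERIV_ident open_ball ur])
      fix x :: complex assume "x \<in> ball 0 r" thus "x = G (sin (\<phi> x))" using \<phi>_inv by (simp add: G_def)
    qed
    have eq1: "gI \<kappa> (sin (\<phi> u)) * (cos (\<phi> u) * deriv \<phi> u) = 1"
      using DERIV_unique[OF d1 d2] .
    have sq: "csqrt (1 - sin (\<phi> u) ^ 2) = cos (\<phi> u)"
      by (rule csqrt_unique) (use rec in \<open>auto simp: cos_squared_eq\<close>)
    have k2: "complex_of_real (\<kappa>^2) * sin (\<phi> u) ^ 2 = sin (\<psi> u) ^ 2"
      using \<psi>_sin ur by (simp add: power_mult_distrib)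
    have F: "hyp2f1 (1/6) (5/6) (1/2) (complex_of_real (\<kappa>^2) * sin (\<phi> u) ^ 2) = cos (2/3 * \<psi> u) / cos (\<psi> u)"
      unfolding hyp2f1_HA k2 using e(2) ce c2_nz by (simp add: field_simps)
    have \<phi>': "deriv \<phi> u = cos (\<psi> u) / cos (2/3 * \<psi> u)"
      using eq1 c_nz c2_nz x_nz unfolding gI_def sq F by (simp add: field_simps)
    have ds2: "((\<lambda>u. sin (\<psi> u)) has_field_derivative cos (\<psi> u) * deriv \<psi> u) (at u)"
      by (auto intro!: derivative_eq_intros d\<psi>)
    have ds3: "((\<lambda>u. complex_of_real \<kappa> * sin (\<phi> u)) has_field_derivative \<kappa> * (cos (\<phi> u) * deriv \<phi> u)) (at u)"
      by (auto intro!: derivative_eq_intros d\<phi>)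
    have ds4: "((\<lambda>u. sin (\<psi> u)) has_field_derivative \<kappa> * (cos (\<phi> u) * deriv \<phi> u)) (at u)"
    proof (rule has_field_derivative_transform_within_open[OF ds3 open_ball ur])
      fix x :: complex assume "x \<in> ball 0 r" thus "complex_of_real \<kappa> * sin (\<phi> x) = sin (\<psi> x)" using \<psi>_sin by simp
    qed
    have "cos (\<psi> u) * deriv \<psi> u = \<kappa> * (cos (\<phi> u) * deriv \<phi> u)"
      using DERIV_unique[OF ds2 ds4] .
    hence \<psi>': "deriv \<psi> u = \<kappa> * cos (\<phi> u) / cos (2/3 * \<psi> u)"
      using c2_nz x_nz unfolding \<phi>' by (simp add: field_simps)
    show "cos (\<phi> u) \<noteq> 0 \<and> cos (\<psi> u) \<noteq> 0 \<and> norm (cos (2/3 * \<psi> u) - 1) < 1/10 \<and>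
       (\<phi> has_field_derivative cos (\<psi> u) / cos (2/3 * \<psi> u)) (at u) \<and>
       (\<psi> has_field_derivative \<kappa> * cos (\<phi> u) / cos (2/3 * \<psi> u)) (at u)"
      using c_nz c2_nz cx d\<phi> d\<psi> \<phi>' \<psi>' by simp
  qed
qed



lemma ev_deriv:
  assumes "eventually (\<lambda>w. f w = g w) (at (z::complex))"
  shows "eventually (\<lambda>w. deriv f w = deriv g w) (at z)"
proof -
  from assms obtain d where d: "d > 0" "\<And>w. w \<noteq> z \<Longrightarrow> dist w z < d \<Longrightarrow> f w = g w"
    unfolding eventually_at by blast
  have "eventually (\<lambda>w. w \<in> ball z d - {z}) (at z)"
    using d(1) by (intro eventually_at_in_open) auto
  thus ?thesis
  proof eventually_elim
    case (elim w)
    have "eventually (\<lambda>y. y \<in> ball z d - {z}) (nhds w)"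
      using elim by (intro eventually_nhds_in_open) auto
    hence "eventually (\<lambda>y. f y = g y) (nhds w)"
      by eventually_elim (use d in \<open>auto simp: dist_commute\<close>)
    thus ?case by (rule deriv_cong_ev) simp
  qed
qed

lemma deriv_shift_eq: "deriv (\<lambda>w. g (w + c)) w = deriv g (w + (c::complex))"
  unfolding deriv_def by (simp add: DERIV_shift)

lemma per_deriv:
  assumes "eventually (\<lambda>w. g (w + c) = g w) (at (z::complex))"
  shows "eventually (\<lambda>w. deriv g (w + c) = deriv g w) (at z)"
  using ev_deriv[OF assms] by (simp add: deriv_shift_eq)

lemma per_int:
  fixes f :: "complex \<Rightarrow> complex"
  assumes "\<And>z. f (z + w) = f z"
  shows "f (z + of_int m * w) = f z"
proof -
  have pos: "f (y + of_nat n * w) = f y" for y n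
  proof (induction n)
    case (Suc n)
    have "f (y + of_nat (Suc n) * w) = f ((y + of_nat n * w) + w)" by (simp add: algebra_simps)
    also have "\<dots> = f (y + of_nat n * w)" by (rule assms)
    finally show ?case using Suc by simp
  qed simp
  show ?thesis
  proof (cases m)
    case (nonneg n) thus ?thesis using pos by simp
  next
    case (neg n)
    have "f z = f ((z + of_int m * w) + of_nat (Suc n) * w)" unfolding neg by (simp add: algebra_simps)
    also have "\<dots> = f (z + of_int m * w)" by (rule pos)
    finally show ?thesis ..
  qed
qed

lemma lattice_decomp:
  fixes w1 w2 z :: complex
  assumes "w1 \<noteq> 0" "Im (w2 / w1) \<noteq> 0"
  shows "\<exists>p q :: real. z = of_real p * w1 + of_real q * w2"
proof -
  define t where "t = w2 / w1"
  define q where "q = Im (z / w1) / Im t"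
  define p where "p = Re (z / w1) - q * Re t"
  have "z / w1 = of_real p + of_real q * t"
  proof (rule complex_eqI)
    show "Re (z / w1) = Re (of_real p + of_real q * t)" by (simp add: p_def)
    have tnz: "Im t \<noteq> 0" using assms(2) t_def by simp
    show "Im (z / w1) = Im (of_real p + of_real q * t)" using tnz by (simp add: q_def)
  qed
  hence "z = (of_real p + of_real q * t) * w1" using assms(1) by (simp add: field_simps)
  also have "\<dots> = of_real p * w1 + of_real q * w2" using assms(1) by (simp add: t_def field_simps)
  finally show ?thesis by blast
qed

lemma periodic_entire_const:
  fixes f :: "complex \<Rightarrow> complex"
  assumes hol: "f holomorphic_on UNIV"
    and w: "w1 \<noteq> 0" "Im (w2 / w1) \<noteq> 0"
    and per: "\<And>z. f (z + w1) = f z" "\<And>z. f (z + w2) = f z"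
  shows "f constant_on UNIV"
proof (rule Liouville_theorem[OF hol])
  define K where "K = (\<lambda>pq. of_real (fst pq) * w1 + of_real (snd pq) * w2) ` ({0..1::real} \<times> {0..1::real})"
  have "compact K" unfolding K_def
    by (intro compact_continuous_image continuous_intros compact_Times compact_Icc)
  moreover have "continuous_on K f"
    using hol holomorphic_on_imp_continuous_on holomorphic_on_subset by blast
  ultimately have "compact (f ` K)" by (metis compact_continuous_image)
  hence bK: "bounded (f ` K)" by (rule compact_imp_bounded)
  have "range f \<subseteq> f ` K"
  proof safe
    fix z
    obtain p q :: real where z: "z = of_real p * w1 + of_real q * w2" using lattice_decomp[OF w] by blast
    define z0 where "z0 = of_real (p - of_int \<lfloor>p\<rfloor>) * w1 + of_real (q - of_int \<lfloor>q\<rfloor>) * w2"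
    have "z0 \<in> K" unfolding K_def z0_def
      by (rule image_eqI[of _ _ "(p - of_int \<lfloor>p\<rfloor>, q - of_int \<lfloor>q\<rfloor>)"])
         (use real_of_int_floor_add_one_gt[of p] real_of_int_floor_add_one_gt[of q] in \<open>auto simp: algebra_simps\<close>)
    have "z = (z0 + of_int \<lfloor>p\<rfloor> * w1) + of_int \<lfloor>q\<rfloor> * w2" unfolding z z0_def by (simp add: algebra_simps)
    hence "f z = f z0" using per_int[of f w1, OF per(1)] per_int[of f w2, OF per(2)] by simp
    thus "f z \<in> f ` K" using \<open>z0 \<in> K\<close> by blast
  qed
  thus "bounded (range f)" using bK bounded_subset by blast
qed



lemma elliptic_has_zero:
  fixes X :: "complex \<Rightarrow> complex"
  assumes mero: "X meromorphic_on UNIV"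
    and w: "w1 \<noteq> 0" "Im (w2 / w1) \<noteq> 0"
    and per: "\<And>z. eventually (\<lambda>w. X (w + w1) = X w \<and> X (w + w2) = X w) (at z)"
    and lim1: "X \<midarrow>0\<rightarrow> 1"
    and nc: "\<not> eventually (\<lambda>w. X w = 1) (at 0)"
  shows "\<exists>u. X \<midarrow>u\<rightarrow> 0"
proof (rule ccontr)
  assume nz: "\<not> (\<exists>u. X \<midarrow>u\<rightarrow> 0)"
  define Y where "Y = (\<lambda>w. inverse (X w))"
  have XY: "X w = inverse (Y w)" for w by (simp add: Y_def)
  have meroY: "Y meromorphic_on UNIV" unfolding Y_def by (intro meromorphic_intros mero)
  have limY: "\<exists>c. Y \<midarrow>u\<rightarrow> c" for u
  proof -
    have ne: "not_essential Y u" by (rule meromorphic_on_not_essential[OF meromorphic_on_subset[OF meroY]]) auto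
    have "\<not> is_pole Y u"
    proof
      assume "is_pole Y u"
      hence "filterlim Y at_infinity (at u)" by (simp add: is_pole_def)
      hence "((\<lambda>w. inverse (Y w)) \<longlongrightarrow> 0) (at u)"
        by (rule filterlim_compose[OF tendsto_inverse_0])
      hence "X \<midarrow>u\<rightarrow> 0" by (simp add: XY[abs_def])
      thus False using nz by blast
    qed
    thus ?thesis using ne by (auto simp: not_essential_def)
  qed
  define R where "R = remove_sings Y"
  have limR: "Y \<midarrow>u\<rightarrow> R u" for u
  proof -
    obtain c where c: "Y \<midarrow>u\<rightarrow> c" using limY by blast
    hence "R u = c" unfolding R_def by (rule remove_sings_eqI)
    thus ?thesis using c by simp
  qed
  have isoY: "isolated_singularity_at Y u" for u
    by (rule meromorphic_on_isolated_singularity[OF meromorphic_on_subset[OF meroY]]) auto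
  have anR: "R analytic_on {u}" for u
    unfolding R_def using remove_sings_analytic_at[OF isoY] limY by blast
  have "R analytic_on UNIV" using anR analytic_on_analytic_at by blast
  hence holR: "R holomorphic_on UNIV" by (rule analytic_imp_holomorphic)
  have perR: "R (z + w0) = R z" if w0: "w0 = w1 \<or> w0 = w2" for z w0
  proof -
    have "(\<lambda>w. Y (w + w0)) \<midarrow>(z + w0 - w0)\<rightarrow> R (z + w0)" by (rule LIM_offset[OF limR])
    hence l: "(\<lambda>w. Y (w + w0)) \<midarrow>z\<rightarrow> R (z + w0)" by simp
    have "eventually (\<lambda>w. Y (w + w0) = Y w) (at z)"
      using per[of z] by eventually_elim (use w0 in \<open>auto simp: Y_def\<close>)
    with l have "Y \<midarrow>z\<rightarrow> R (z + w0)" by (rule Lim_transform_eventually)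
    hence "R z = R (z + w0)" unfolding R_def by (rule remove_sings_eqI)
    thus ?thesis by simp
  qed
  have "R constant_on UNIV"
    by (rule periodic_entire_const[OF holR w]) (use perR in auto)
  then obtain C where C: "\<And>w. R w = C" by (auto simp: constant_on_def)
  have "eventually (\<lambda>w. R w = Y w) (at 0)" unfolding R_def by (rule eventually_remove_sings_eq_at[OF isoY])
  hence evX: "eventually (\<lambda>w. X w = inverse C) (at 0)" by eventually_elim (simp add: C XY)
  hence "X \<midarrow>0\<rightarrow> inverse C" by (rule tendsto_eventually)
  hence "inverse C = 1" using tendsto_unique[OF at_neq_bot _ lim1] by blast
  thus False using evX nc by simp
qed

lemma elliptic_contra:
  fixes X Aa Bb :: "complex \<Rightarrow> complex"
  assumes mero: "X meromorphic_on UNIV"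
    and w: "w1 \<noteq> 0" "Im (w2 / w1) \<noteq> 0"
    and per: "\<And>z. eventually (\<lambda>w. X (w + w1) = X w \<and> X (w + w2) = X w) (at z)"
    and lim1: "X \<midarrow>0\<rightarrow> 1"
    and nc: "\<not> eventually (\<lambda>w. X w = 1) (at 0)"
    and Emero: "(\<lambda>w. 9 * X w * (deriv X w)^2 * Aa (X w) - 2 * (1 - X w ^ 2) * Bb (X w)) meromorphic_on UNIV"
    and Eloc: "eventually (\<lambda>w. 9 * X w * (deriv X w)^2 * Aa (X w) - 2 * (1 - X w ^ 2) * Bb (X w) = 0) (at 0)"
    and cA: "\<And>z. isCont Aa z" and cB: "\<And>z. isCont Bb z" and B0: "Bb 0 \<noteq> 0"
  shows False
proof -
  define E where "E = (\<lambda>w. 9 * X w * (deriv X w)^2 * Aa (X w) - 2 * (1 - X w ^ 2) * Bb (X w))"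
  have glob: "eventually (\<lambda>w. E w = 0) (at z)" for z
  proof -
    from meromorphic_imp_constant_or_avoid[OF Emero[folded E_def] open_UNIV connected_UNIV, of 0]
    show ?thesis
    proof
      assume "eventually (\<lambda>z. E z = 0) (cosparse UNIV)"
      thus ?thesis by (simp add: eventually_cosparse_open_eq)
    next
      assume "eventually (\<lambda>z. E z \<noteq> 0) (cosparse UNIV)"
      hence "eventually (\<lambda>z. E z \<noteq> 0) (at 0)" by (simp add: eventually_cosparse_open_eq)
      with Eloc have "eventually (\<lambda>_. False) (at (0::complex))"
        by eventually_elim (auto simp: E_def)
      thus ?thesis by simp
    qed
  qed
  obtain u where u: "X \<midarrow>u\<rightarrow> 0" using elliptic_has_zero[OF mero w per lim1 nc] by blast
  have iso: "isolated_singularity_at X u"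
    by (rule meromorphic_on_isolated_singularity[OF meromorphic_on_subset[OF mero]]) auto
  define RX where "RX = remove_sings X"
  have an: "RX analytic_on {u}" unfolding RX_def by (rule remove_sings_analytic_at[OF iso u])
  have "eventually (\<lambda>w. RX w = X w) (at u)" unfolding RX_def by (rule eventually_remove_sings_eq_at[OF iso])
  hence evd: "eventually (\<lambda>w. deriv RX w = deriv X w) (at u)" by (rule ev_deriv)
  have "deriv RX analytic_on {u}" using an by (rule analytic_deriv)
  hence "isCont (deriv RX) u" by (rule analytic_at_imp_isCont)
  hence "deriv RX \<midarrow>u\<rightarrow> deriv RX u" by (simp add: isCont_def)
  hence dl: "deriv X \<midarrow>u\<rightarrow> deriv RX u" using evd by (rule Lim_transform_eventually)
  have "E \<midarrow>u\<rightarrow> 9 * 0 * (deriv RX u)^2 * Aa 0 - 2 * (1 - 0 ^ 2) * Bb 0"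
    unfolding E_def
    by (intro tendsto_intros u dl isCont_tendsto_compose[OF cA u] isCont_tendsto_compose[OF cB u])
  moreover have "E \<midarrow>u\<rightarrow> 0" using glob[of u] by (simp add: tendsto_eventually)
  ultimately have "9 * 0 * (deriv RX u)^2 * Aa 0 - 2 * (1 - 0 ^ 2) * Bb 0 = (0::complex)"
    by (rule tendsto_unique[OF at_neq_bot])
  thus False using B0 by simp
qed



lemma cos_triple: "cos (3 * t) = 4 * cos t ^ 3 - 3 * cos (t::complex)"
proof -
  have "cos (3 * t) = cos (2 * t + t)" by (simp add: algebra_simps)
  also have "\<dots> = 4 * cos t ^ 3 - 3 * cos t"
    unfolding cos_add sin_double cos_double using sin_cos_squared_add[of t]
    by algebra
  finally show ?thesis .
qed

lemma odeA_alg: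
  fixes sn cs cp x k :: complex
  assumes "cs \<noteq> 0" "x \<noteq> 0" "sn^2 + cs^2 = 1" "cp^2 = 1 - k^2 * sn^2"
  shows "x^2 * (2 * sn * cp / (x * cs^3))^2 = 4 * (sn^2/cs^2) * (1 + sn^2/cs^2) * (1 + (1 - k^2) * (sn^2/cs^2))"
proof -
  have "x^2 * (2 * sn * cp / (x * cs^3))^2 = 4 * sn^2 * cp^2 / cs^6"
    using assms(1,2) by (simp add: field_simps power2_eq_square)
  also have "\<dots> = 4 * sn^2 * (1 - k^2 * sn^2) / cs^6" using assms(4) by simp
  also have "\<dots> = 4 * (sn^2/cs^2) * ((cs^2 + sn^2)/cs^2) * ((cs^2 + (1 - k^2) * sn^2)/cs^2)"
    using assms(3) by (simp add: field_simps)
  also have "\<dots> = 4 * (sn^2/cs^2) * (1 + sn^2/cs^2) * (1 + (1 - k^2) * (sn^2/cs^2))"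
    using assms(1) by (simp add: add_divide_distrib)
  finally show ?thesis .
qed

lemma X_alg:
  fixes sn cs cp x k l2 b :: complex
  assumes "cs \<noteq> 0" "x \<noteq> 0" "sn \<noteq> 0" "cp \<noteq> 0" "4 * x^2 - 3 \<noteq> 0" "sn^2 + cs^2 = 1"
    "cp^2 = 1 - k^2 * sn^2" "4 * x^3 - 3 * x = 1 - 2 * k^2 * sn^2" "l2 = 1 - k^2"
    "b = 2 * sn * cp / (x * cs^3)"
  shows "(1 + (2 * l2 - 1) * (sn^2/cs^2)) * b^2 /
     ((1 + sn^2/cs^2) * (4 * (4 * (sn^2/cs^2) * (1 + sn^2/cs^2) * (1 + l2 * (sn^2/cs^2))) - 3 * b^2)) = x"
proof -
  define a where "a = sn^2/cs^2"
  have bnz: "b \<noteq> 0" using assms by simp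
  have Q: "4 * a * (1 + a) * (1 + l2 * a) = x^2 * b^2"
    using odeA_alg[OF assms(1,2,6,7)] unfolding a_def assms(9) assms(10) by simp
  have 1: "1 + a = 1 / cs^2" unfolding a_def using assms(1,6) by (simp add: field_simps)
  have 2: "1 + (2 * l2 - 1) * a = (4 * x^3 - 3 * x) / cs^2"
    unfolding a_def assms(8) assms(9) using assms(1,6)
    by (simp add: field_simps)
  have "(1 + (2 * l2 - 1) * a) * b^2 / ((1 + a) * (4 * (4 * a * (1 + a) * (1 + l2 * a)) - 3 * b^2))
      = (1 + (2 * l2 - 1) * a) * b^2 / ((1 + a) * (4 * (x^2 * b^2) - 3 * b^2))"
    by (simp only: Q)
  also have "\<dots> = ((4 * x^3 - 3 * x) / cs^2) * b^2 / ((1 / cs^2) * (b^2 * (4 * x^2 - 3)))"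
    unfolding 1 2 by (simp add: algebra_simps)
  also have "\<dots> = x" using assms(1,5) bnz by (simp add: field_simps power2_eq_square power3_eq_cube)
  finally show ?thesis unfolding a_def .
qed

lemma xode_alg:
  fixes x sn3 cs sn k l2 xd dl :: complex
  assumes "x \<noteq> 0" "sn3^2 + x^2 = 1" "sn^2 + cs^2 = 1" "l2 = 1 - k^2"
    "4 * x^3 - 3 * x = 1 - 2 * k^2 * sn^2" "xd = - sn3 * (2/3 * (k * cs / x))"
    "dl = (if l2 = 1/2 then 1 else 0)"
  shows "9 * x * xd^2 * ((1 - dl) * x + dl) - 2 * (1 - x^2) * ((1 - dl) * (4 * x^3 - 3 * x + 1 - 2 * l2) + dl * (4 * x^2 - 3)) = 0"
proof -
  have gen: "9 * x^2 * xd^2 = 2 * (1 - x^2) * (4 * x^3 - 3 * x + 1 - 2 * l2)"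
  proof -
    have "9 * x^2 * xd^2 = 4 * sn3^2 * k^2 * cs^2" using assms(1) unfolding assms(6)
      by (simp add: field_simps power2_eq_square)
    also have "\<dots> = 2 * (1 - x^2) * (4 * x^3 - 3 * x + 1 - 2 * l2)"
      unfolding assms(5) assms(4) using assms(2,3) by algebra
    finally show ?thesis .
  qed
  show ?thesis
  proof (cases "l2 = 1/2")
    case True
    hence "x * (9 * x * xd^2) = x * (2 * (1 - x^2) * (4 * x^2 - 3))" using gen
      by (simp add: algebra_simps power2_eq_square power3_eq_cube)
    hence "9 * x * xd^2 = 2 * (1 - x^2) * (4 * x^2 - 3)" using assms(1) by simp
    thus ?thesis using True assms(7) by simp
  next
    case False thus ?thesis using gen assms(7) by (simp add: algebra_simps power2_eq_square)
  qed
qed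

lemma near1:
  assumes "norm (x - 1) < (1/10::real)"
  shows "x \<noteq> 0" "4 * x^2 - 3 \<noteq> (0::complex)"
proof -
  have "norm x \<ge> 9/10"
    using norm_triangle_ineq2[of 1 x] assms by (simp add: norm_minus_commute)
  thus "x \<noteq> 0" by auto
  have "norm x ^ 2 \<ge> (9/10)^2" using \<open>norm x \<ge> 9/10\<close> by (intro power_mono) auto
  hence "norm (x^2) \<ge> 81/100" by (simp add: norm_power norm_mult power2_eq_square)
  hence "norm (x^2) > 3/4" by simp
  show "4 * x^2 - 3 \<noteq> 0"
  proof
    assume "4 * x^2 - 3 = 0"
    hence "x^2 = 3/4" by (simp add: field_simps)
    hence "norm (x^2) = norm (3/4 :: complex)" by (rule arg_cong)
    hence "norm (x^2) = 3/4" by simp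
    thus False using \<open>norm (x^2) > 3/4\<close> by simp
  qed
qed

lemma cos2psi:
  fixes y k sn :: complex
  assumes "sin y = k * sn"
  shows "4 * cos (2/3 * y)^3 - 3 * cos (2/3 * y) = 1 - 2 * k^2 * sn^2"
proof -
  have "4 * cos (2/3 * y)^3 - 3 * cos (2/3 * y) = cos (3 * (2/3 * y))" by (rule cos_triple[symmetric])
  also have "3 * (2/3 * y) = 2 * y" by simp
  also have "cos (2 * y) = 1 - 2 * sin y ^ 2" by (rule cos_double_sin)
  finally show ?thesis using assms by (simp add: power_mult_distrib)
qed

lemma dT_gen:
  fixes f :: "complex \<Rightarrow> complex"
  assumes "(f has_field_derivative f') (at u)" "cos (f u) \<noteq> 0"
  shows "((\<lambda>u. sin (f u)^2 / cos (f u)^2) has_field_derivative 2 * sin (f u) * f' / cos (f u)^3) (at u)"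
  apply (rule derivative_eq_intros refl assms(1) | simp)+
   apply (use assms(2) in simp)
  apply (simp add: field_simps assms(2))
  using sin_cos_squared_add[of "f u"] by algebra

theorem theorem12:
  fixes \<kappa> r :: real and \<phi> \<psi> :: "complex \<Rightarrow> complex"
  assumes \<kappa>: "0 < \<kappa>" "\<kappa> < 1"
    and r: "r > 0"
    and \<phi>_hol: "\<phi> holomorphic_on ball 0 r" and \<phi>0: "\<phi> 0 = 0"
    and \<phi>_inv: "\<forall>u\<in>ball 0 r.
       contour_integral (linepath 0 (sin (\<phi> u)))
         (\<lambda>t. hyp2f1 (1/6) (5/6) (1/2) (complex_of_real (\<kappa>^2) * t^2) / csqrt (1 - t^2)) = u"
    and \<psi>_hol: "\<psi> holomorphic_on ball 0 r" and \<psi>0: "\<psi> 0 = 0"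
    and \<psi>_sin: "\<forall>u\<in>ball 0 r. sin (\<psi> u) = complex_of_real \<kappa> * sin (\<phi> u)"
  defines "lam \<equiv> sqrt (1 - \<kappa>^2)"
    and "T \<equiv> (\<lambda>u. (sin (\<phi> u))^2 / (cos (\<phi> u))^2)"
    and "t \<equiv> (\<lambda>u. sin (\<phi> u) / cos (\<phi> u))"
    and "Nab \<equiv> (\<lambda>u. (cos (2/3 * \<psi> u))^2)"
  shows "(\<exists>\<epsilon>>0. \<forall>u\<in>ball 0 \<epsilon>.
            Nab u * (deriv T u)^2 = 4 * T u * (1 + T u) * (1 + complex_of_real (lam^2) * T u))
         \<and> \<not> extends_to_elliptic T \<and> \<not> extends_to_elliptic t"
proof -
  have gIeq: "(\<lambda>t. hyp2f1 (1/6) (5/6) (1/2) (complex_of_real (\<kappa>^2) * t^2) / csqrt (1 - t^2)) = gI \<kappa>"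
    by (intro ext) (simp only: gI_def)
  have \<phi>_inv': "\<forall>u\<in>ball 0 r. contour_integral (linepath 0 (sin (\<phi> u))) (gI \<kappa>) = u"
    using \<phi>_inv unfolding gIeq .
  obtain \<rho> where \<rho>: "0 < \<rho>" "\<rho> \<le> r" and L: "\<And>u. u \<in> ball 0 \<rho> \<Longrightarrow> cos (\<phi> u) \<noteq> 0 \<and> cos (\<psi> u) \<noteq> 0 \<and> norm (cos (2/3 * \<psi> u) - 1) < 1/10 \<and>
       (\<phi> has_field_derivative cos (\<psi> u) / cos (2/3 * \<psi> u)) (at u) \<and>
       (\<psi> has_field_derivative \<kappa> * cos (\<phi> u) / cos (2/3 * \<psi> u)) (at u)"
    using local_facts[OF \<kappa> r \<phi>_hol \<phi>0 \<phi>_inv' \<psi>_hol \<psi>0 \<psi>_sin] by blast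
  have lam2: "lam^2 = 1 - \<kappa>^2" unfolding lam_def using \<kappa> by (simp add: power_le_one)
  have l2c: "complex_of_real (lam^2) = 1 - (complex_of_real \<kappa>)^2" by (simp add: lam2)
  have ur: "u \<in> ball 0 r" if "u \<in> ball 0 \<rho>" for u using that \<rho> by auto
  have s0: "u = 0" if "u \<in> ball 0 r" "sin (\<phi> u) = 0" for u
    using \<phi>_inv' that by force
  have cp2: "cos (\<psi> u)^2 = 1 - (complex_of_real \<kappa>)^2 * sin (\<phi> u)^2" if "u \<in> ball 0 r" for u
    using \<psi>_sin that by (simp add: cos_squared_eq power_mult_distrib)
  have dT: "deriv T u = 2 * sin (\<phi> u) * cos (\<psi> u) / (cos (2/3 * \<psi> u) * cos (\<phi> u)^3)"
    if u: "u \<in> ball 0 \<rho>" for u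
  proof -
    note Lu = L[OF u]
    have "(T has_field_derivative 2 * sin (\<phi> u) * cos (\<psi> u) / (cos (2/3 * \<psi> u) * cos (\<phi> u)^3)) (at u)"
      unfolding T_def using dT_gen[OF Lu[THEN conjunct2, THEN conjunct2, THEN conjunct2, THEN conjunct1]] Lu
      by (simp add: field_simps)
    thus ?thesis by (rule DERIV_imp_deriv)
  qed
  have sinpsi: "sin (\<psi> u) = complex_of_real \<kappa> * sin (\<phi> u)" if "u \<in> ball 0 r" for u
    using \<psi>_sin that by simp
  have trip: "4 * cos (2/3 * \<psi> u)^3 - 3 * cos (2/3 * \<psi> u) = 1 - 2 * (complex_of_real \<kappa>)^2 * sin (\<phi> u)^2"
    if "u \<in> ball 0 r" for u
    by (rule cos2psi[OF sinpsi[OF that]])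
  have part1: "\<exists>\<epsilon>>0. \<forall>u\<in>ball 0 \<epsilon>.
            Nab u * (deriv T u)^2 = 4 * T u * (1 + T u) * (1 + complex_of_real (lam^2) * T u)"
  proof (intro exI[of _ \<rho>] conjI ballI)
    show "\<rho> > 0" by (rule \<rho>(1))
    fix u :: complex assume u: "u \<in> ball 0 \<rho>"
    note Lu = L[OF u]
    have xnz: "cos (2/3 * \<psi> u) \<noteq> 0" using near1 Lu by blast
    show "Nab u * (deriv T u)^2 = 4 * T u * (1 + T u) * (1 + complex_of_real (lam^2) * T u)"
      unfolding Nab_def dT[OF u] unfolding T_def l2c
      using odeA_alg[OF _ xnz _ cp2[OF ur[OF u]]] Lu sin_cos_squared_add[of "\<phi> u"] by simp
  qed
  have nT: "\<not> extends_to_elliptic T"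
  proof
    assume "extends_to_elliptic T"
    then obtain g w1 w2 where gm: "g meromorphic_on UNIV" and w: "w1 \<noteq> 0" "Im (w2 / w1) \<noteq> 0"
      and gp: "\<And>z. eventually (\<lambda>w. g (w + w1) = g w \<and> g (w + w2) = g w) (at z)"
      and gT: "eventually (\<lambda>u. g u = T u) (at 0)"
      unfolding extends_to_elliptic_def elliptic_fun_def by blast
    define l2 where "l2 = complex_of_real (lam^2)"
    define X where "X w = (1 + (2 * l2 - 1) * g w) * (deriv g w)^2 /
       ((1 + g w) * (4 * (4 * g w * (1 + g w) * (1 + l2 * g w)) - 3 * (deriv g w)^2))" for w
    define xf where "xf u = cos (2/3 * \<psi> u)" for u
    define dl :: complex where "dl = (if l2 = 1/2 then 1 else 0)"
    have Xm: "X meromorphic_on UNIV" unfolding X_def[abs_def] by (intro meromorphic_intros gm)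
    have Xp: "eventually (\<lambda>w. X (w + w1) = X w \<and> X (w + w2) = X w) (at z)" for z
    proof -
      have a: "eventually (\<lambda>w. g (w + w1) = g w) (at z)" using gp[of z] by eventually_elim auto
      have b: "eventually (\<lambda>w. g (w + w2) = g w) (at z)" using gp[of z] by eventually_elim auto
      from a b per_deriv[OF a] per_deriv[OF b] show ?thesis
        by eventually_elim (simp add: X_def)
    qed
    have ev0: "eventually (\<lambda>w. w \<in> ball 0 \<rho> - {0}) (at 0)"
      using \<rho> by (intro eventually_at_in_open) auto
    have gT': "eventually (\<lambda>w. deriv g w = deriv T w) (at 0)" by (rule ev_deriv[OF gT])
    have Xx: "eventually (\<lambda>w. X w = xf w) (at 0)"
      using gT gT' ev0
    proof eventually_elim
      case (elim w)
      hence wr: "w \<in> ball 0 \<rho>" "w \<noteq> 0" by auto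
      note Lw = L[OF wr(1)]
      have snz: "sin (\<phi> w) \<noteq> 0" using s0[OF ur[OF wr(1)]] wr(2) by blast
      have "X w = xf w"
        unfolding X_def elim(1) elim(2) dT[OF wr(1)] xf_def
        unfolding T_def l2_def
        by (rule X_alg[where k = "complex_of_real \<kappa>"]) (use Lw near1 snz sin_cos_squared_add[of "\<phi> w"]
          cp2[OF ur[OF wr(1)]] trip[OF ur[OF wr(1)]] l2c in auto)
      thus ?case .
    qed
    have c\<psi>: "isCont \<psi> 0" using \<psi>_hol r
      by (meson centre_in_ball continuous_on_eq_continuous_at holomorphic_on_imp_continuous_on open_ball)
    have "isCont xf 0" unfolding xf_def[abs_def] by (intro continuous_intros c\<psi>)
    hence xfc: "xf \<midarrow>0\<rightarrow> 1" by (simp add: isCont_def xf_def \<psi>0)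
    have "eventually (\<lambda>w. xf w = X w) (at 0)" using Xx by eventually_elim simp
    with xfc have lim1: "X \<midarrow>0\<rightarrow> 1" by (rule Lim_transform_eventually)
    have nc: "\<not> eventually (\<lambda>w. X w = 1) (at 0)"
    proof
      assume "eventually (\<lambda>w. X w = 1) (at 0)"
      with Xx ev0 have "eventually (\<lambda>w. xf w = 1 \<and> w \<in> ball 0 \<rho> - {0}) (at 0)"
        by eventually_elim auto
      from eventually_happens[OF this] obtain w where w1: "xf w = 1" and w2: "w \<in> ball 0 \<rho>" "w \<noteq> 0"
        by auto
      have "1 - 2 * (complex_of_real \<kappa>)^2 * sin (\<phi> w)^2 = 1"
        using trip[OF ur[OF w2(1)]] w1 by (simp add: xf_def)
      hence "sin (\<phi> w) = 0" using \<kappa> by simp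
      thus False using s0[OF ur[OF w2(1)]] w2(2) by blast
    qed
    have xd: "deriv xf w = - sin (2/3 * \<psi> w) * (2/3 * (complex_of_real \<kappa> * cos (\<phi> w) / cos (2/3 * \<psi> w)))"
      if w: "w \<in> ball 0 \<rho>" for w
    proof -
      have d\<psi>: "(\<psi> has_field_derivative complex_of_real \<kappa> * cos (\<phi> w) / cos (2/3 * \<psi> w)) (at w)"
        using L[OF w] by blast
      have "(xf has_field_derivative - sin (2/3 * \<psi> w) * (2/3 * (complex_of_real \<kappa> * cos (\<phi> w) / cos (2/3 * \<psi> w)))) (at w)"
        unfolding xf_def[abs_def] by (auto intro!: derivative_eq_intros d\<psi>)
      thus ?thesis by (rule DERIV_imp_deriv)
    qed
    have Xd: "eventually (\<lambda>w. deriv X w = deriv xf w) (at 0)" by (rule ev_deriv[OF Xx])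
    show False
      apply (rule elliptic_contra[OF Xm w Xp lim1 nc, where Aa = "\<lambda>a. (1 - dl) * a + dl"
          and Bb = "\<lambda>a. (1 - dl) * (4 * a^3 - 3 * a + 1 - 2 * l2) + dl * (4 * a^2 - 3)"])
      subgoal by (intro meromorphic_intros Xm)
      subgoal using Xx Xd ev0
      proof eventually_elim
        case (elim w)
        hence wr: "w \<in> ball 0 \<rho>" by auto
        note Lw = L[OF wr]
        show ?case unfolding elim(1) elim(2) xd[OF wr] unfolding xf_def
          by (rule xode_alg[where sn = "sin (\<phi> w)" and k = "complex_of_real \<kappa>"])
             (use Lw near1 sin_cos_squared_add[of "\<phi> w"] sin_cos_squared_add[of "2/3 * \<psi> w"]
               trip[OF ur[OF wr]] l2c l2_def dl_def in auto)
      qed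
      subgoal by (intro continuous_intros)
      subgoal by (intro continuous_intros)
      subgoal by (cases "l2 = 1/2") (auto simp: dl_def mult.commute)
      done
  qed
  have nt: "\<not> extends_to_elliptic t"
  proof
    assume "extends_to_elliptic t"
    then obtain g w1 w2 where gm: "g meromorphic_on UNIV" and w: "w1 \<noteq> 0" "Im (w2 / w1) \<noteq> 0"
      and gp: "\<And>z. eventually (\<lambda>w. g (w + w1) = g w \<and> g (w + w2) = g w) (at z)"
      and gt: "eventually (\<lambda>u. g u = t u) (at 0)"
      unfolding extends_to_elliptic_def elliptic_fun_def by blast
    have per2: "\<forall>z. eventually (\<lambda>w. g (w + w1)^2 = g w^2 \<and> g (w + w2)^2 = g w^2) (at z)"
  proof
      fix z show "eventually (\<lambda>w. g (w + w1)^2 = g w^2 \<and> g (w + w2)^2 = g w^2) (at z)"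
        using gp[of z] by eventually_elim auto
    qed
    have "elliptic_fun (\<lambda>w. g w ^ 2)" unfolding elliptic_fun_def
    proof (rule conjI)
      show "(\<lambda>w. g w ^ 2) meromorphic_on UNIV" by (intro meromorphic_intros gm)
      show "\<exists>\<omega>1 \<omega>2. \<omega>1 \<noteq> 0 \<and> Im (\<omega>2 / \<omega>1) \<noteq> 0 \<and>
        (\<forall>z. eventually (\<lambda>w. g (w + \<omega>1)^2 = g w^2 \<and> g (w + \<omega>2)^2 = g w^2) (at z))"
        using w per2 by blast
    qed
    moreover have "eventually (\<lambda>u. g u ^ 2 = T u) (at 0)"
      using gt by eventually_elim (simp add: t_def T_def power_divide)
    ultimately have "extends_to_elliptic T" unfolding extends_to_elliptic_def by blast
    with nT show False ..
  qed
  show ?thesis using part1 nT nt by blast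
qed


end
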